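(* For every integer $r\ge-1$, the generating function $\sum_\pi q^{|\pi|}$ over all partitions $\pi$ with $n$ copies of $n$ (including the empty one) in which, with parts in ascending lexicographic order, the weighted difference between each part and the preceding part is at least $r$, equals $$\sum_{m\ge0}\frac{q^{m^2+r\binom m2}}{(q;q)_m\,(q;q^2)_m}.$$
   Context: $M=\{m_i: 1\le i\le m\}$; a partition with $n$ copies of $n$ is a finite multiset of elements of $M$, $|\pi|$ the sum of values (first entries). Lexicographic order: $m_i>n_j$ iff $m>n$, or $m=n$ and $i>j$. Weighted difference $((m_i-n_j))=m-n-i-j$. $(a;q)_m=\prod_{j=0}^{m-1}(1-aq^j)$. *)

theory Defs
  imports "HOL-Computational_Algebra.Formal_Power_Series" "HOL-Library.Multiset"
    "HOL-Library.Product_Lexorder"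
begin

text \<open>A part m_i is encoded as the pair (m, i) with 1 <= i <= m.
  The product order from Product_Lexorder is exactly the lexicographic order
  of the paper: (m,i) > (n,j) iff m > n, or m = n and i > j.\<close>

definition in_M :: "nat \<times> nat \<Rightarrow> bool" where
  "in_M p \<longleftrightarrow> 1 \<le> snd p \<and> snd p \<le> fst p"

definition wdiff :: "nat \<times> nat \<Rightarrow> nat \<times> nat \<Rightarrow> int" where
  "wdiff a b = int (fst a) - int (fst b) - int (snd a) - int (snd b)"

definition ncopy_partition :: "(nat \<times> nat) multiset \<Rightarrow> bool" where
  "ncopy_partition P \<longleftrightarrow> (\<forall>p \<in># P. in_M p)"

definition pweight :: "(nat \<times> nat) multiset \<Rightarrow> nat" where
  "pweight P = sum_mset (image_mset fst P)"

definition wdiff_at_least :: "int \<Rightarrow> (nat \<times> nat) multiset \<Rightarrow> bool" where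
  "wdiff_at_least r P \<longleftrightarrow>
     (let xs = sorted_list_of_multiset P in
       \<forall>k. Suc k < length xs \<longrightarrow> wdiff (xs ! Suc k) (xs ! k) \<ge> r)"

text \<open>q-Pochhammer (a;q)_m specialised: (q^a; q^b)_m = prod_{j<m} (1 - q^(a + b j)).\<close>
definition qpoch_fps :: "nat \<Rightarrow> nat \<Rightarrow> nat \<Rightarrow> real fps" where
  "qpoch_fps a b m = (\<Prod>j<m. 1 - fps_X ^ (a + b * j))"

end

theory Submission
  imports Defs
begin

fun chain :: "int \<Rightarrow> (nat \<times> nat) list \<Rightarrow> bool" where
  "chain r (a # b # xs) = (r \<le> wdiff b a \<and> chain r (b # xs))"
| "chain r _ = True"

definition okl :: "(nat \<times> nat) list \<Rightarrow> bool" where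
  "okl xs \<longleftrightarrow> (\<forall>x\<in>set xs. in_M x)"

definition wt :: "(nat \<times> nat) list \<Rightarrow> nat" where
  "wt xs = sum_list (map fst xs)"

definition shu :: "nat \<Rightarrow> (nat \<times> nat) list \<Rightarrow> (nat \<times> nat) list" where
  "shu k xs = map (\<lambda>p. (fst p + k, snd p)) xs"

definition sh :: "nat \<Rightarrow> (nat \<times> nat) list \<Rightarrow> (nat \<times> nat) list" where
  "sh k xs = map (\<lambda>p. (fst p - k, snd p)) xs"

lemma chain_Cons: "chain r (a # xs) \<longleftrightarrow> chain r xs \<and> (xs \<noteq> [] \<longrightarrow> r \<le> wdiff (hd xs) a)"
  by (cases xs) auto

lemma chain_nth: "chain r xs \<longleftrightarrow> (\<forall>k. Suc k < length xs \<longrightarrow> r \<le> wdiff (xs ! Suc k) (xs ! k))"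
proof (induction r xs rule: chain.induct)
  case (1 r a b xs)
  show ?case
  proof
    assume "chain r (a # b # xs)"
    then show "\<forall>k. Suc k < length (a # b # xs) \<longrightarrow> r \<le> wdiff ((a # b # xs) ! Suc k) ((a # b # xs) ! k)"
      using 1 by (auto simp: less_Suc_eq_0_disj)
  next
    assume H: "\<forall>k. Suc k < length (a # b # xs) \<longrightarrow> r \<le> wdiff ((a # b # xs) ! Suc k) ((a # b # xs) ! k)"
    have "r \<le> wdiff b a" using H[rule_format, of 0] by simp
    moreover have "chain r (b # xs)" using 1 H by fastforce
    ultimately show "chain r (a # b # xs)" by simp
  qed
qed auto

lemma chain_shu: "chain r (shu k xs) = chain r xs"
  by (induction r xs rule: chain.induct) (auto simp: shu_def wdiff_def)

lemma chain_sh: "\<forall>x\<in>set xs. k \<le> fst x \<Longrightarrow> chain r (sh k xs) = chain r xs"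
  by (induction r xs rule: chain.induct) (auto simp: sh_def wdiff_def)

lemma sh_shu[simp]: "sh k (shu k xs) = xs"
  by (induction xs) (auto simp: sh_def shu_def)

lemma shu_sh: "\<forall>x\<in>set xs. k \<le> fst x \<Longrightarrow> shu k (sh k xs) = xs"
  by (induction xs) (auto simp: sh_def shu_def)

lemma length_shu[simp]: "length (shu k xs) = length xs" by (simp add: shu_def)
lemma length_sh[simp]: "length (sh k xs) = length xs" by (simp add: sh_def)

lemma wt_shu: "wt (shu k xs) = wt xs + k * length xs"
  by (induction xs) (auto simp: wt_def shu_def)

lemma wt_sh: "\<forall>x\<in>set xs. k \<le> fst x \<Longrightarrow> wt (sh k xs) + k * length xs = wt xs"
  by (induction xs) (auto simp: wt_def sh_def)

lemma okl_shu: "okl xs \<Longrightarrow> okl (shu k xs)"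
  by (auto simp: okl_def shu_def in_M_def)

lemma okl_sh: "okl xs \<Longrightarrow> \<forall>x\<in>set xs. snd x + k \<le> fst x \<Longrightarrow> okl (sh k xs)"
  by (auto simp: okl_def sh_def in_M_def)

lemma wt_ge_length: "okl xs \<Longrightarrow> length xs \<le> wt xs"
  by (induction xs) (auto simp: okl_def wt_def in_M_def)

lemma chain_bound:
  assumes "chain r (a # xs)" "okl (a # xs)" "r \<ge> -1"
  shows "\<forall>x\<in>set xs. int (fst x) - int (snd x) \<ge> int (fst a) + int (snd a) + r"
  using assms
proof (induction xs arbitrary: a)
  case Nil
  then show ?case by simp
next
  case (Cons b ys)
  have ab: "int (fst b) - int (snd b) \<ge> int (fst a) + int (snd a) + r"
    using Cons.prems(1) by (simp add: wdiff_def)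
  have b1: "snd b \<ge> 1" using Cons.prems(2) by (simp add: okl_def in_M_def)
  have IH: "\<forall>x\<in>set ys. int (fst x) - int (snd x) \<ge> int (fst b) + int (snd b) + r"
    using Cons.IH[of b] Cons.prems by (simp add: okl_def)
  show ?case using ab b1 IH Cons.prems(3) by force
qed

lemma chain_sorted:
  assumes "chain r xs" "okl xs" "r \<ge> -1"
  shows "sorted xs"
  using assms
proof (induction r xs rule: chain.induct)
  case (1 r a b xs)
  have "fst a < fst b" using 1(2,3,4) by (auto simp: okl_def in_M_def wdiff_def)
  then have "a \<le> b" by (cases a; cases b) auto
  moreover have "sorted (b # xs)" using 1 by (simp add: okl_def)
  ultimately show ?case by (simp only: sorted2)
qed auto

lemma card_witness:
  assumes "\<forall>a\<in>A. g (f a) = a" "\<forall>b\<in>B. f (g b) = b" "f ` A \<subseteq> B" "g ` B \<subseteq> A"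
  shows "card A = card B"
  using bij_betw_byWitness[OF assms] bij_betw_same_card by blast

definition VL :: "int \<Rightarrow> nat \<Rightarrow> nat \<Rightarrow> (nat \<times> nat) list set" where
  "VL r m N = {xs. length xs = m \<and> okl xs \<and> chain r xs \<and> wt xs = N}"

lemma u_mono:
  assumes "chain r (a # zs)" "okl (a # zs)" "r \<ge> -1" "x \<in> set (a # zs)"
  shows "int (fst x) - int (snd x) \<ge> int (fst a) - int (snd a)"
proof -
  have "snd a \<ge> 1" using assms(2) by (simp add: okl_def in_M_def)
  then show ?thesis using chain_bound[OF assms(1-3)] assms(3,4) by force
qed

lemma VL_empty: "N < m \<Longrightarrow> VL r m N = {}"
  using wt_ge_length by (force simp: VL_def)

lemma card_A:
  assumes r: "r \<ge> -1" and m: "m \<ge> 1" "m \<le> N"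
  shows "card {xs\<in>VL r m N. snd (hd xs) < fst (hd xs)} = card (VL r m (N - m))"
proof (rule card_witness[where f = "sh 1" and g = "shu 1"])
  show "\<forall>a\<in>{xs \<in> VL r m N. snd (hd xs) < fst (hd xs)}. shu 1 (sh 1 a) = a"
  proof
    fix xs assume xs: "xs \<in> {xs \<in> VL r m N. snd (hd xs) < fst (hd xs)}"
    then obtain a zs where az: "xs = a # zs" using m by (cases xs) (auto simp: VL_def)
    have "\<forall>x\<in>set xs. snd x + 1 \<le> fst x"
    proof
      fix x assume "x \<in> set xs"
      then have "int (fst x) - int (snd x) \<ge> int (fst a) - int (snd a)"
        using u_mono[of r a zs x] xs az r by (auto simp: VL_def)
      then show "snd x + 1 \<le> fst x" using xs az by auto
    qed
    then show "shu 1 (sh 1 xs) = xs" by (intro shu_sh) auto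
  qed
  show "\<forall>b\<in>VL r m (N - m). sh 1 (shu 1 b) = b" by simp
  show "sh 1 ` {xs \<in> VL r m N. snd (hd xs) < fst (hd xs)} \<subseteq> VL r m (N - m)"
  proof
    fix ys assume "ys \<in> sh 1 ` {xs \<in> VL r m N. snd (hd xs) < fst (hd xs)}"
    then obtain xs where ys: "ys = sh 1 xs" and xs: "xs \<in> VL r m N" "snd (hd xs) < fst (hd xs)" by auto
    then obtain a zs where az: "xs = a # zs" using m by (cases xs) (auto simp: VL_def)
    have all: "\<forall>x\<in>set xs. snd x + 1 \<le> fst x"
    proof
      fix x assume "x \<in> set xs"
      then have "int (fst x) - int (snd x) \<ge> int (fst a) - int (snd a)"
        using u_mono[of r a zs x] xs az r by (auto simp: VL_def)
      then show "snd x + 1 \<le> fst x" using xs az by auto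
    qed
    have "wt (sh 1 xs) + 1 * length xs = wt xs" by (rule wt_sh) (use all in auto)
    moreover have "\<forall>x\<in>set xs. 1 \<le> fst x" using all by auto
    ultimately show "ys \<in> VL r m (N - m)" using xs all ys chain_sh[of xs 1 r]
      by (auto simp: VL_def okl_sh)
  qed
  show "shu 1 ` VL r m (N - m) \<subseteq> {xs \<in> VL r m N. snd (hd xs) < fst (hd xs)}"
  proof
    fix xs assume "xs \<in> shu 1 ` VL r m (N - m)"
    then obtain ys where xs: "xs = shu 1 ys" and ys: "ys \<in> VL r m (N - m)" by auto
    then obtain b zs where bz: "ys = b # zs" using m by (cases ys) (auto simp: VL_def)
    have "in_M b" using ys bz by (auto simp: VL_def okl_def)
    then have "snd (hd xs) < fst (hd xs)" using xs bz by (auto simp: shu_def in_M_def)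
    moreover have "xs \<in> VL r m N" using ys xs m by (auto simp: VL_def okl_shu chain_shu wt_shu)
    ultimately show "xs \<in> {xs \<in> VL r m N. snd (hd xs) < fst (hd xs)}" by simp
  qed
qed

fun fD :: "(nat \<times> nat) list \<Rightarrow> (nat \<times> nat) list" where
  "fD (a # zs) = (fst a - 1, snd a - 1) # sh 2 zs"
| "fD [] = []"

fun gD :: "(nat \<times> nat) list \<Rightarrow> (nat \<times> nat) list" where
  "gD (a # zs) = (fst a + 1, snd a + 1) # shu 2 zs"
| "gD [] = []"

lemma hd_sh: "zs \<noteq> [] \<Longrightarrow> hd (sh k zs) = (fst (hd zs) - k, snd (hd zs))"
  by (cases zs) (auto simp: sh_def)

lemma hd_shu: "zs \<noteq> [] \<Longrightarrow> hd (shu k zs) = (fst (hd zs) + k, snd (hd zs))"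
  by (cases zs) (auto simp: shu_def)

lemma sh_Nil_iff[simp]: "sh k zs = [] \<longleftrightarrow> zs = []" by (simp add: sh_def)
lemma shu_Nil_iff[simp]: "shu k zs = [] \<longleftrightarrow> zs = []" by (simp add: shu_def)

lemma wt_Cons: "wt (a # zs) = fst a + wt zs" by (simp add: wt_def)

lemma okl_Cons: "okl (a # zs) \<longleftrightarrow> in_M a \<and> okl zs" by (simp add: okl_def)

lemma fD_props:
  assumes xs: "xs \<in> VL r m N" and m: "m \<ge> 1" and h: "fst (hd xs) = snd (hd xs)" "2 \<le> snd (hd xs)"
    and r: "r \<ge> -1"
  shows "fD xs \<in> VL r m (N - (2*m-1)) \<and> 2*m-1 \<le> N \<and> fst (hd (fD xs)) = snd (hd (fD xs))
         \<and> gD (fD xs) = xs"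
proof -
  obtain a zs where az: "xs = a # zs" using xs m by (cases xs) (auto simp: VL_def)
  have ch: "chain r (a # zs)" and ok: "okl (a # zs)" and len: "length zs = m - 1"
    and w: "wt (a # zs) = N"
    using xs az by (auto simp: VL_def)
  have ai: "fst a = snd a" "2 \<le> snd a" using h az by auto
  have bnd: "\<forall>x\<in>set zs. int (fst x) - int (snd x) \<ge> int (fst a) + int (snd a) + r"
    using chain_bound[OF ch ok r] .
  have all: "\<forall>x\<in>set zs. snd x + 2 \<le> fst x"
    using bnd ai r by force
  have all2: "\<forall>x\<in>set zs. 2 \<le> fst x" using all by auto
  have wsh: "wt (sh 2 zs) + 2 * length zs = wt zs" by (rule wt_sh[OF all2])
  have okzs: "okl zs" using ok by (simp add: okl_Cons)
  have chzs: "chain r zs" using ch by (simp add: chain_Cons)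
  have ok': "okl (fD xs)" using az ai okzs all by (auto simp: okl_Cons in_M_def intro!: okl_sh)
  have ch': "chain r (fD xs)"
  proof -
    have "chain r (sh 2 zs)" using chzs chain_sh[OF all2] by simp
    moreover have "zs \<noteq> [] \<Longrightarrow> r \<le> wdiff (hd (sh 2 zs)) (fst a - 1, snd a - 1)"
    proof -
      assume ne: "zs \<noteq> []"
      have "r \<le> wdiff (hd zs) a" using ch ne by (simp add: chain_Cons)
      moreover have "2 \<le> fst (hd zs)" using all2 ne by simp
      ultimately show ?thesis using ne ai by (simp add: hd_sh wdiff_def)
    qed
    ultimately show ?thesis using az by (simp add: chain_Cons)
  qed
  have wfd: "wt (fD xs) + (2*m-1) = N" using az w wsh len ai m
    by (simp add: wt_Cons)
  have "gD (fD xs) = xs" using az ai all2 by (cases a) (simp add: shu_sh)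
  then show ?thesis using ok' ch' wfd az len m ai by (auto simp: VL_def)
qed

lemma gD_props:
  assumes ys: "ys \<in> VL r m N" and m: "m \<ge> 1" and h: "fst (hd ys) = snd (hd ys)"
  shows "gD ys \<in> VL r m (N + (2*m-1)) \<and> fst (hd (gD ys)) = snd (hd (gD ys)) \<and> 2 \<le> snd (hd (gD ys))
         \<and> fD (gD ys) = ys"
proof -
  obtain a zs where az: "ys = a # zs" using ys m by (cases ys) (auto simp: VL_def)
  have ch: "chain r (a # zs)" and ok: "okl (a # zs)" and len: "length zs = m - 1"
    and w: "wt (a # zs) = N"
    using ys az by (auto simp: VL_def)
  have ai: "fst a = snd a" "1 \<le> snd a" using h az ok by (auto simp: okl_Cons in_M_def)
  have okzs: "okl zs" using ok by (simp add: okl_Cons)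
  have chzs: "chain r zs" using ch by (simp add: chain_Cons)
  have ok': "okl (gD ys)" using az ai okzs by (auto simp: okl_Cons in_M_def intro!: okl_shu)
  have ch': "chain r (gD ys)"
  proof -
    have "chain r (shu 2 zs)" using chzs chain_shu by simp
    moreover have "zs \<noteq> [] \<Longrightarrow> r \<le> wdiff (hd (shu 2 zs)) (fst a + 1, snd a + 1)"
    proof -
      assume ne: "zs \<noteq> []"
      have "r \<le> wdiff (hd zs) a" using ch ne by (simp add: chain_Cons)
      then show ?thesis using ne ai by (simp add: hd_shu wdiff_def)
    qed
    ultimately show ?thesis using az by (simp add: chain_Cons)
  qed
  have wgd: "wt (gD ys) = N + (2*m-1)" using az w len ai m
    by (simp add: wt_Cons wt_shu)
  have "fD (gD ys) = ys" using az by simp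
  then show ?thesis using ok' ch' wgd az len ai m by (auto simp: VL_def)
qed

definition fE :: "nat \<Rightarrow> (nat \<times> nat) list \<Rightarrow> (nat \<times> nat) list" where
  "fE s xs = sh s (tl xs)"

definition gE :: "nat \<Rightarrow> (nat \<times> nat) list \<Rightarrow> (nat \<times> nat) list" where
  "gE s ys = (1, 1) # shu s ys"

lemma fE_props:
  assumes xs: "xs \<in> VL r m N" and m: "m \<ge> 1" and h: "hd xs = (1, 1)"
    and r: "r \<ge> -1" and s: "s = nat (2 + r)"
  shows "fE s xs \<in> VL r (m - 1) (N - (1 + (m - 1) * s)) \<and> 1 + (m - 1) * s \<le> N \<and> gE s (fE s xs) = xs"
proof -
  obtain a zs where az: "xs = a # zs" using xs m by (cases xs) (auto simp: VL_def)
  have ch: "chain r (a # zs)" and ok: "okl (a # zs)" and len: "length zs = m - 1"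
    and w: "wt (a # zs) = N"
    using xs az by (auto simp: VL_def)
  have ai: "a = (1, 1)" using h az by auto
  have bnd: "\<forall>x\<in>set zs. int (fst x) - int (snd x) \<ge> int (fst a) + int (snd a) + r"
    using chain_bound[OF ch ok r] .
  have all: "\<forall>x\<in>set zs. snd x + s \<le> fst x"
    using bnd ai r s by force
  have all2: "\<forall>x\<in>set zs. s \<le> fst x" using all by auto
  have wsh: "wt (sh s zs) + s * length zs = wt zs" by (rule wt_sh[OF all2])
  have okzs: "okl zs" using ok by (simp add: okl_Cons)
  have chzs: "chain r zs" using ch by (simp add: chain_Cons)
  have "okl (fE s xs)" using az okzs all by (auto simp: fE_def intro!: okl_sh)
  moreover have "chain r (fE s xs)" using az chzs chain_sh[OF all2] by (simp add: fE_def)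
  moreover have "wt (fE s xs) + (1 + (m - 1) * s) = N" using az w wsh len ai
    by (simp add: wt_Cons fE_def mult.commute)
  moreover have "gE s (fE s xs) = xs" using az ai all2 by (simp add: fE_def gE_def shu_sh)
  ultimately show ?thesis using az len by (auto simp: VL_def fE_def)
qed

lemma gE_props:
  assumes ys: "ys \<in> VL r (m - 1) N" and m: "m \<ge> 1"
    and r: "r \<ge> -1" and s: "s = nat (2 + r)"
  shows "gE s ys \<in> VL r m (N + (1 + (m - 1) * s)) \<and> hd (gE s ys) = (1, 1) \<and> fE s (gE s ys) = ys"
proof -
  have ch: "chain r ys" and ok: "okl ys" and len: "length ys = m - 1"
    and w: "wt ys = N"
    using ys by (auto simp: VL_def)
  have "okl (gE s ys)" using ok by (auto simp: gE_def okl_Cons in_M_def intro!: okl_shu)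
  moreover have "chain r (gE s ys)"
  proof -
    have "chain r (shu s ys)" using ch chain_shu by simp
    moreover have "ys \<noteq> [] \<Longrightarrow> r \<le> wdiff (hd (shu s ys)) (1, 1)"
    proof -
      assume ne: "ys \<noteq> []"
      have "in_M (hd ys)" using ok ne by (simp add: okl_def)
      then show ?thesis using ne r s by (simp add: hd_shu wdiff_def in_M_def)
    qed
    ultimately show ?thesis by (simp add: gE_def chain_Cons)
  qed
  moreover have "wt (gE s ys) = N + (1 + (m - 1) * s)" using w len
    by (simp add: gE_def wt_Cons wt_shu mult.commute)
  moreover have "fE s (gE s ys) = ys" by (simp add: fE_def gE_def)
  ultimately show ?thesis using len m by (auto simp: VL_def gE_def)
qed

lemma finite_VL: "finite (VL r m N)"
proof (rule finite_subset)
  show "VL r m N \<subseteq> {xs. set xs \<subseteq> {..N} \<times> {..N} \<and> length xs = m}"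
  proof
    fix xs assume xs: "xs \<in> VL r m N"
    have "\<forall>x\<in>set xs. fst x \<le> N \<and> snd x \<le> N"
    proof
      fix x assume x: "x \<in> set xs"
      have "fst x \<le> sum_list (map fst xs)" using x by (intro member_le_sum_list) auto
      moreover have "snd x \<le> fst x" using x xs by (auto simp: VL_def okl_def in_M_def)
      ultimately show "fst x \<le> N \<and> snd x \<le> N" using xs by (auto simp: VL_def wt_def)
    qed
    then show "xs \<in> {xs. set xs \<subseteq> {..N} \<times> {..N} \<and> length xs = m}" using xs
      by (auto simp: VL_def mem_Times_iff)
  qed
  show "finite {xs. set xs \<subseteq> {..N} \<times> {..N} \<and> length xs = m}"
    by (rule finite_lists_length_eq) auto
qed

definition DS :: "int \<Rightarrow> nat \<Rightarrow> nat \<Rightarrow> (nat \<times> nat) list set" where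
  "DS r m N = {xs\<in>VL r m N. fst (hd xs) = snd (hd xs)}"

definition ES :: "int \<Rightarrow> nat \<Rightarrow> nat \<Rightarrow> (nat \<times> nat) list set" where
  "ES r m N = {xs\<in>VL r m N. hd xs = (1, 1)}"

lemma hd_in_M: "xs \<in> VL r m N \<Longrightarrow> m \<ge> 1 \<Longrightarrow> in_M (hd xs)"
  by (cases xs) (auto simp: VL_def okl_def)

lemma rec1:
  assumes r: "r \<ge> -1" and m: "m \<ge> 1"
  shows "card (VL r m N) = (if m \<le> N then card (VL r m (N - m)) else 0) + card (DS r m N)"
proof (cases "m \<le> N")
  case False
  then show ?thesis using VL_empty[of N m r] by (simp add: DS_def)
next
  case True
  have eq: "VL r m N = {xs\<in>VL r m N. snd (hd xs) < fst (hd xs)} \<union> DS r m N"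
    using hd_in_M[OF _ m] by (force simp: DS_def in_M_def)
  have "card (VL r m N) = card {xs\<in>VL r m N. snd (hd xs) < fst (hd xs)} + card (DS r m N)"
    by (subst eq, rule card_Un_disjoint) (auto simp: DS_def intro: finite_subset[OF _ finite_VL])
  then show ?thesis using card_A[OF r m True] True by simp
qed

lemma rec2:
  assumes r: "r \<ge> -1" and m: "m \<ge> 1"
  shows "card (DS r m N) = (if 2*m-1 \<le> N then card (DS r m (N - (2*m-1))) else 0) + card (ES r m N)"
proof -
  let ?D = "{xs\<in>DS r m N. 2 \<le> snd (hd xs)}"
  have eq: "DS r m N = ?D \<union> ES r m N"
    using hd_in_M[OF _ m] by (force simp: DS_def ES_def in_M_def prod_eq_iff)
  have "card (DS r m N) = card ?D + card (ES r m N)"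
    by (subst eq, rule card_Un_disjoint) (auto simp: DS_def ES_def intro: finite_subset[OF _ finite_VL])
  moreover have "card ?D = (if 2*m-1 \<le> N then card (DS r m (N - (2*m-1))) else 0)"
  proof (cases "2*m-1 \<le> N")
    case False
    then have "?D = {}" using fD_props[OF _ m _ _ r] by (auto simp: DS_def)
    then have "card ?D = 0" by (metis card.empty)
    then show ?thesis using False by simp
  next
    case True
    have "card ?D = card (DS r m (N - (2*m-1)))"
    proof (rule card_witness[where f = fD and g = gD])
      show "\<forall>a\<in>?D. gD (fD a) = a" using fD_props[OF _ m _ _ r] by (auto simp: DS_def)
      show "\<forall>b\<in>DS r m (N - (2*m-1)). fD (gD b) = b" using gD_props[OF _ m] by (auto simp: DS_def)
      show "fD ` ?D \<subseteq> DS r m (N - (2*m-1))" using fD_props[OF _ m _ _ r] by (auto simp: DS_def)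
      show "gD ` DS r m (N - (2*m-1)) \<subseteq> ?D"
      proof
        fix xs assume "xs \<in> gD ` DS r m (N - (2*m-1))"
        then obtain ys where "xs = gD ys" "ys \<in> DS r m (N - (2*m-1))" by auto
        then show "xs \<in> ?D" using gD_props[OF _ m, of ys r "N - (2*m-1)"] True by (auto simp: DS_def)
      qed
    qed
    then show ?thesis using True by simp
  qed
  ultimately show ?thesis by simp
qed

lemma rec3:
  assumes r: "r \<ge> -1" and m: "m \<ge> 1" and s: "s = nat (2 + r)"
  shows "card (ES r m N) = (if 1 + (m-1)*s \<le> N then card (VL r (m-1) (N - (1 + (m-1)*s))) else 0)"
proof (cases "1 + (m-1)*s \<le> N")
  case False
  then have "ES r m N = {}" using fE_props[OF _ m _ r s] by (auto simp: ES_def)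
  then show ?thesis using False by simp
next
  case True
  have "card (ES r m N) = card (VL r (m-1) (N - (1 + (m-1)*s)))"
  proof (rule card_witness[where f = "fE s" and g = "gE s"])
    show "\<forall>a\<in>ES r m N. gE s (fE s a) = a" using fE_props[OF _ m _ r s] by (auto simp: ES_def)
    show "\<forall>b\<in>VL r (m-1) (N - (1 + (m-1)*s)). fE s (gE s b) = b" by (simp add: fE_def gE_def)
    show "fE s ` ES r m N \<subseteq> VL r (m-1) (N - (1 + (m-1)*s))" using fE_props[OF _ m _ r s] by (auto simp: ES_def)
    show "gE s ` VL r (m-1) (N - (1 + (m-1)*s)) \<subseteq> ES r m N"
    proof
      fix xs assume "xs \<in> gE s ` VL r (m-1) (N - (1 + (m-1)*s))"
      then obtain ys where "xs = gE s ys" "ys \<in> VL r (m-1) (N - (1 + (m-1)*s))" by auto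
      then show "xs \<in> ES r m N" using gE_props[OF _ m r s, of ys "N - (1 + (m-1)*s)"] True
        by (auto simp: ES_def)
    qed
  qed
  then show ?thesis using True by simp
qed

definition FF :: "int \<Rightarrow> nat \<Rightarrow> real fps" where
  "FF r m = Abs_fps (\<lambda>N. real (card (VL r m N)))"

definition FDS :: "int \<Rightarrow> nat \<Rightarrow> real fps" where
  "FDS r m = Abs_fps (\<lambda>N. real (card (DS r m N)))"

definition FES :: "int \<Rightarrow> nat \<Rightarrow> real fps" where
  "FES r m = Abs_fps (\<lambda>N. real (card (ES r m N)))"

lemma fps_rec:
  assumes r: "r \<ge> -1" and m: "m \<ge> 1"
  shows "FF r m * (1 - fps_X ^ m) * (1 - fps_X ^ (2*m-1)) = fps_X ^ (1 + (m-1) * nat (2 + r)) * FF r (m-1)"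
proof -
  have e1: "FF r m = fps_X ^ m * FF r m + FDS r m"
    by (rule fps_ext) (simp only: fps_add_nth fps_X_power_mult_nth, simp add: FF_def FDS_def rec1[OF r m] not_less)
  have e2: "FDS r m = fps_X ^ (2*m-1) * FDS r m + FES r m"
    by (rule fps_ext) (simp only: fps_add_nth fps_X_power_mult_nth, simp add: FDS_def FES_def rec2[OF r m] not_less)
  have e3: "FES r m = fps_X ^ (1 + (m-1) * nat (2 + r)) * FF r (m-1)"
    by (rule fps_ext) (simp only: fps_add_nth fps_X_power_mult_nth, simp add: FF_def FES_def rec3[OF r m refl] not_less)
  have "FF r m * (1 - fps_X ^ m) = FDS r m" using e1 by (simp add: algebra_simps)
  moreover have "FDS r m * (1 - fps_X ^ (2*m-1)) = FES r m" using e2 by (simp add: algebra_simps)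
  ultimately show ?thesis using e3 by simp
qed

lemma FF0: "FF r 0 = 1"
proof (rule fps_ext)
  fix n
  have "VL r 0 n = (if n = 0 then {[]} else {})" by (auto simp: VL_def okl_def wt_def)
  then show "fps_nth (FF r 0) n = fps_nth 1 n" by (simp add: FF_def)
qed

definition QQ :: "nat \<Rightarrow> real fps" where
  "QQ m = qpoch_fps 1 1 m * qpoch_fps 1 2 m"

lemma QQ_Suc: "QQ (Suc m) = QQ m * (1 - fps_X ^ (Suc m)) * (1 - fps_X ^ (2 * Suc m - 1))"
  by (simp add: QQ_def qpoch_fps_def algebra_simps)

lemma QQ0: "fps_nth (QQ m) 0 = 1"
  by (induction m) (auto simp: QQ_Suc, simp add: QQ_def qpoch_fps_def)

fun ee :: "int \<Rightarrow> nat \<Rightarrow> nat" where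
  "ee r 0 = 0"
| "ee r (Suc m) = ee r m + 1 + m * nat (2 + r)"

lemma FF_QQ:
  assumes r: "r \<ge> -1"
  shows "FF r m * QQ m = fps_X ^ ee r m"
proof (induction m)
  case 0
  then show ?case by (simp add: FF0 QQ_def qpoch_fps_def)
next
  case (Suc m)
  have "FF r (Suc m) * QQ (Suc m) = (FF r (Suc m) * (1 - fps_X ^ (Suc m)) * (1 - fps_X ^ (2 * Suc m - 1))) * QQ m"
    by (simp add: QQ_Suc mult_ac)
  also have "\<dots> = fps_X ^ (1 + m * nat (2 + r)) * (FF r m * QQ m)"
    using fps_rec[OF r, of "Suc m"] by (simp add: mult_ac)
  also have "\<dots> = fps_X ^ ee r (Suc m)" using Suc by (simp add: power_add[symmetric] add_ac)
  finally show ?case .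
qed

lemma ee_eq:
  assumes r: "r \<ge> -1"
  shows "int (ee r m) = int (m\<^sup>2) + r * int (m choose 2)"
proof (induction m)
  case 0
  then show ?case by simp
next
  case (Suc m)
  have c: "Suc m choose 2 = (m choose 2) + m"
    by (simp add: numeral_2_eq_2)
  show ?case using Suc r by (simp add: c power2_eq_square algebra_simps)
qed

lemma term_eq:
  assumes r: "r \<ge> -1"
  shows "fps_X ^ nat (int (m\<^sup>2) + r * int (m choose 2)) * inverse (qpoch_fps 1 1 m * qpoch_fps 1 2 m) = FF r m"
proof -
  have "nat (int (m\<^sup>2) + r * int (m choose 2)) = ee r m" using ee_eq[OF r, of m] by simp
  then have "fps_X ^ nat (int (m\<^sup>2) + r * int (m choose 2)) * inverse (qpoch_fps 1 1 m * qpoch_fps 1 2 m)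
      = FF r m * QQ m * inverse (QQ m)" using FF_QQ[OF r, of m] by (simp add: QQ_def)
  also have "\<dots> = FF r m" using inverse_mult_eq_1'[of "QQ m"] QQ0[of m] by (simp add: mult.assoc)
  finally show ?thesis .
qed

lemma wt_mset: "pweight (mset xs) = wt xs"
  by (simp add: pweight_def wt_def sum_mset_sum_list flip: mset_map)

lemma card_S_L:
  assumes r: "r \<ge> -1"
  shows "card {P. ncopy_partition P \<and> wdiff_at_least r P \<and> pweight P = N}
       = card {xs. okl xs \<and> chain r xs \<and> wt xs = N}"
proof (rule card_witness[where f = sorted_list_of_multiset and g = mset])
  show "\<forall>a\<in>{P. ncopy_partition P \<and> wdiff_at_least r P \<and> pweight P = N}.
          mset (sorted_list_of_multiset a) = a" by simp
  show "\<forall>b\<in>{xs. okl xs \<and> chain r xs \<and> wt xs = N}. sorted_list_of_multiset (mset b) = b"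
    using chain_sorted[OF _ _ r] by (auto intro: sorted_sort_id)
  show "sorted_list_of_multiset ` {P. ncopy_partition P \<and> wdiff_at_least r P \<and> pweight P = N}
        \<subseteq> {xs. okl xs \<and> chain r xs \<and> wt xs = N}"
  proof
    fix xs assume "xs \<in> sorted_list_of_multiset ` {P. ncopy_partition P \<and> wdiff_at_least r P \<and> pweight P = N}"
    then obtain P where xs: "xs = sorted_list_of_multiset P" and P: "ncopy_partition P" "wdiff_at_least r P" "pweight P = N"
      by auto
    have "okl xs" using P(1) xs by (simp add: okl_def ncopy_partition_def)
    moreover have "chain r xs" using P(2) xs by (simp add: chain_nth wdiff_at_least_def Let_def)
    moreover have "wt xs = N" using P(3) wt_mset[of xs] xs by simp
    ultimately show "xs \<in> {xs. okl xs \<and> chain r xs \<and> wt xs = N}" by simp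
  qed
  show "mset ` {xs. okl xs \<and> chain r xs \<and> wt xs = N}
        \<subseteq> {P. ncopy_partition P \<and> wdiff_at_least r P \<and> pweight P = N}"
  proof
    fix P assume "P \<in> mset ` {xs. okl xs \<and> chain r xs \<and> wt xs = N}"
    then obtain xs where P: "P = mset xs" and xs: "okl xs" "chain r xs" "wt xs = N" by auto
    have s: "sorted_list_of_multiset P = xs" using P xs chain_sorted[OF _ _ r] by (simp add: sorted_sort_id)
    have "ncopy_partition P" using P xs by (simp add: okl_def ncopy_partition_def)
    moreover have "wdiff_at_least r P" using s xs by (simp add: chain_nth wdiff_at_least_def Let_def)
    moreover have "pweight P = N" using P xs wt_mset by simp
    ultimately show "P \<in> {P. ncopy_partition P \<and> wdiff_at_least r P \<and> pweight P = N}" by simp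
  qed
qed

lemma card_L:
  "card {xs. okl xs \<and> chain r xs \<and> wt xs = N} = (\<Sum>m\<le>N. card (VL r m N))"
proof -
  have eq: "{xs. okl xs \<and> chain r xs \<and> wt xs = N} = (\<Union>m\<in>{..N}. VL r m N)"
    using wt_ge_length by (fastforce simp: VL_def)
  show ?thesis unfolding eq
    by (rule card_UN_disjoint) (auto simp: finite_VL, auto simp: VL_def)
qed

theorem corollary25:
  fixes r :: int
  assumes "r \<ge> -1"
  shows "(\<lambda>m::nat. fps_X ^ nat (int (m\<^sup>2) + r * int (m choose 2))
            * inverse (qpoch_fps 1 1 m * qpoch_fps 1 2 m))
         sums
         Abs_fps (\<lambda>N. real (card {P. ncopy_partition P \<and> wdiff_at_least r P
                                      \<and> pweight P = N}))"
proof -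
  have t: "(\<lambda>m::nat. fps_X ^ nat (int (m\<^sup>2) + r * int (m choose 2))
            * inverse (qpoch_fps 1 1 m * qpoch_fps 1 2 m)) = FF r"
    using term_eq[OF assms] by (intro ext) simp
  show ?thesis unfolding t sums_def
  proof (rule tendsto_fpsI)
    fix k
    show "eventually (\<lambda>n. fps_nth (\<Sum>i<n. FF r i) k =
            fps_nth (Abs_fps (\<lambda>N. real (card {P. ncopy_partition P \<and> wdiff_at_least r P
                                      \<and> pweight P = N}))) k) sequentially"
      unfolding eventually_sequentially
    proof (intro exI allI impI)
      fix n assume n: "Suc k \<le> n"
      have "fps_nth (\<Sum>i<n. FF r i) k = (\<Sum>i<n. real (card (VL r i k)))"
        by (simp add: fps_sum_nth FF_def)
      also have "\<dots> = (\<Sum>i\<le>k. real (card (VL r i k)))"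
        by (rule sum.mono_neutral_right) (use n VL_empty in auto)
      also have "\<dots> = real (card {P. ncopy_partition P \<and> wdiff_at_least r P \<and> pweight P = k})"
        using card_S_L[OF assms, of k] card_L[of r k] by simp
      finally show "fps_nth (\<Sum>i<n. FF r i) k =
            fps_nth (Abs_fps (\<lambda>N. real (card {P. ncopy_partition P \<and> wdiff_at_least r P
                                      \<and> pweight P = N}))) k" by simp
    qed
  qed
qed

end
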